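(* Assume $f$ has a unique global maximizer $g$ and the problem contains no weak epistasis. Let $v_0,v_1,\dots,v_{\ell-1}$ be an enumeration of $V$ in topological order of the epistatic graph, i.e. $\{v_j\}\not\Rightarrow v_i$ whenever $i<j$ (so the epistatic graph is acyclic). Then Partial Enumeration run on the partition $D=(\{v_0\},\{v_1\},\dots,\{v_{\ell-1}\})$, from any initial chromosome, ends with allele $g[v_i]$ at locus $v_i$ for every $i$; i.e. it returns the global optimum, using $2\ell$ fitness evaluations.
   Context: Fix $\ell\ge1$, loci $V=\{0,\dots,\ell-1\}$, chromosomes $\vec y\in\{0,1\}^V$, fitness $f:\{0,1\}^V\to\mathbb R$ (maximized) with unique global maximizer $g$. An assignment $A$ is a set of pairs $(v,a)$ ($v\in V$, $a\in\{0,1\}$) with at most one pair per locus; coverage $\mathcal C(A)$ is the set of loci in $A$; $\vec y^A$ denotes $\vec y$ with the alleles at loci of $\mathcal C(A)$ overwritten by $A$. $\Psi_A$ (constrained optima) is the set of chromosomes agreeing with $A$ on $\mathcal C(A)$ with maximum fitness among such chromosomes; $\Psi_A[v]=\{\psi_v:\psi\in\Psi_A\}$. Epistasis: for $v\in V$ and nonempty $S\subseteq V\setminus\{v\}$, $S\Rightarrow v$ iff for every $s\in S$ there exists an assignment $A$ with $\mathcal C(A)=S$ and $\Psi_A[v]\neq\Psi_{A\setminus\{(s,A[s])\}}[v]$ (where $A[s]$ is the allele of $A$ at $s$); the empty set is never epistatic. An epistasis $S\Rightarrow v$ with $|S|\ge2$ is weak if no nonempty proper subset $T\subsetneq S$ has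 $T\Rightarrow v$; "no weak epistasis" means no epistasis is weak. The epistatic graph is the directed graph on $V$ with edge $u\to v$ iff $\{u\}\Rightarrow v$. Partial Enumeration (PE) takes an ordered partition $D=(d_0,\dots,d_{m-1})$ of $V$, starts from an arbitrary (random) chromosome $\vec y$, and for $i=0,\dots,m-1$ in turn, for each of the $2^{|d_i|}$ assignments $A$ with $\mathcal C(A)=d_i$ (in any order), replaces $\vec y$ by $\vec y^A$ whenever $f(\vec y^A)>f(\vec y)$; it returns the final $\vec y$. *)

theory Defs
  imports Complex_Main
begin

text \<open>Loci are the elements of a finite type 'v (playing the role of V = {0..l-1}, l = CARD('v) >= 1);
  chromosomes are maps 'v => bool; assignments are partial maps 'v => bool option
  (at most one allele per locus), with coverage dom A.\<close>

type_synonym 'v chrom = "'v \<Rightarrow> bool"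
type_synonym 'v assignment = "'v \<Rightarrow> bool option"

definition apply_asg :: "'v chrom \<Rightarrow> 'v assignment \<Rightarrow> 'v chrom" where
  "apply_asg y A = (\<lambda>v. case A v of None \<Rightarrow> y v | Some a \<Rightarrow> a)"

definition agrees :: "'v chrom \<Rightarrow> 'v assignment \<Rightarrow> bool" where
  "agrees y A \<longleftrightarrow> (\<forall>v a. A v = Some a \<longrightarrow> y v = a)"

definition Psi :: "('v chrom \<Rightarrow> real) \<Rightarrow> 'v assignment \<Rightarrow> 'v chrom set" where
  "Psi f A = {\<psi>. agrees \<psi> A \<and> (\<forall>\<phi>. agrees \<phi> A \<longrightarrow> f \<phi> \<le> f \<psi>)}"

definition Psi_at :: "('v chrom \<Rightarrow> real) \<Rightarrow> 'v assignment \<Rightarrow> 'v \<Rightarrow> bool set" where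
  "Psi_at f A v = (\<lambda>\<psi>. \<psi> v) ` Psi f A"

definition epistatic :: "('v chrom \<Rightarrow> real) \<Rightarrow> 'v set \<Rightarrow> 'v \<Rightarrow> bool" where
  "epistatic f S v \<longleftrightarrow> S \<noteq> {} \<and> v \<notin> S \<and>
     (\<forall>s\<in>S. \<exists>A. dom A = S \<and> Psi_at f A v \<noteq> Psi_at f (A(s := None)) v)"

definition weak_epistasis :: "('v chrom \<Rightarrow> real) \<Rightarrow> 'v set \<Rightarrow> 'v \<Rightarrow> bool" where
  "weak_epistasis f S v \<longleftrightarrow> card S \<ge> 2 \<and> epistatic f S v \<and>
     \<not> (\<exists>T. T \<noteq> {} \<and> T \<subset> S \<and> epistatic f T v)"

definition no_weak_epistasis :: "('v::finite chrom \<Rightarrow> real) \<Rightarrow> bool" where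
  "no_weak_epistasis f \<longleftrightarrow> (\<forall>S v. \<not> weak_epistasis f S v)"

definition unique_global_max :: "('v chrom \<Rightarrow> real) \<Rightarrow> 'v chrom \<Rightarrow> bool" where
  "unique_global_max f g \<longleftrightarrow> (\<forall>y. y \<noteq> g \<longrightarrow> f y < f g)"

text \<open>For each block d_i of the ordered partition, the assignments with
  coverage d_i are tried in some order, given as a list. The state is the current chromosome
  together with the number of fitness evaluations f(y^A) performed so far.\<close>

definition pe_step :: "('v chrom \<Rightarrow> real) \<Rightarrow> 'v assignment \<Rightarrow> 'v chrom \<times> nat \<Rightarrow> 'v chrom \<times> nat" where
  "pe_step f A st = (let y = fst st; y' = apply_asg y A in
      (if f y' > f y then y' else y, Suc (snd st)))"

definition pe_run :: "('v chrom \<Rightarrow> real) \<Rightarrow> 'v assignment list list \<Rightarrow> 'v chrom \<Rightarrow> 'v chrom \<times> nat" where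
  "pe_run f orders y = fold (\<lambda>As st. fold (pe_step f) As st) orders (y, 0)"

definition valid_orders :: "'v set list \<Rightarrow> 'v assignment list list \<Rightarrow> bool" where
  "valid_orders D orders \<longleftrightarrow> length orders = length D \<and>
     (\<forall>i<length D. distinct (orders ! i) \<and> set (orders ! i) = {A. dom A = D ! i})"

end

theory Submission
  imports Defs
begin

lemma no_epi_subsets:
  fixes f :: "('v::finite) chrom \<Rightarrow> real"
  assumes nw: "no_weak_epistasis f" and sing: "\<forall>u\<in>U. \<not> epistatic f {u} v"
  shows "T \<subseteq> U \<Longrightarrow> \<not> epistatic f T v"
proof (induction "card T" arbitrary: T rule: less_induct)
  case less
  show ?case
  proof
    assume e: "epistatic f T v"
    then have ne: "T \<noteq> {}" by (simp add: epistatic_def)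
    have fin: "finite T" by simp
    show False
    proof (cases "card T \<ge> 2")
      case True
      from nw have "\<not> weak_epistasis f T v" by (simp add: no_weak_epistasis_def)
      with True e obtain T' where T': "T' \<noteq> {}" "T' \<subset> T" "epistatic f T' v"
        by (auto simp: weak_epistasis_def)
      have "card T' < card T" using T'(2) fin by (simp add: psubset_card_mono)
      with less T' show False by blast
    next
      case False
      with ne fin have "card T = 1"
        by (metis card_0_eq Suc_1 less_2_cases not_le One_nat_def)
      then obtain u where "T = {u}" by (auto simp: card_Suc_eq)
      with less.prems sing e show False by auto
    qed
  qed
qed

lemma chain:
  fixes f :: "('v::finite) chrom \<Rightarrow> real"
  assumes ne: "\<forall>T. T \<subseteq> U \<longrightarrow> \<not> epistatic f T v" and vU: "v \<notin> U"
  shows "dom A \<subseteq> U \<Longrightarrow> Psi_at f A v = Psi_at f Map.empty v"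
proof (induction "card (dom A)" arbitrary: A rule: less_induct)
  case less
  show ?case
  proof (cases "dom A = {}")
    case True
    then have "A = Map.empty" by simp
    then show ?thesis by simp
  next
    case False
    have "\<not> epistatic f (dom A) v" using ne less.prems by blast
    with False vU less.prems obtain s where s: "s \<in> dom A"
      and sA: "\<forall>A'. dom A' = dom A \<longrightarrow> Psi_at f A' v = Psi_at f (A'(s := None)) v"
      unfolding epistatic_def by blast
    have d: "dom (A(s := None)) = dom A - {s}" by simp
    have "card (dom (A(s := None))) < card (dom A)"
      unfolding d using s by (intro card_Diff1_less) simp_all
    moreover have "dom (A(s := None)) \<subseteq> U" using less.prems d by blast
    ultimately have "Psi_at f (A(s := None)) v = Psi_at f Map.empty v" using less by blast
    with sA show ?thesis by simp
  qed
qed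

lemma Psi_empty:
  assumes "unique_global_max f g"
  shows "Psi f Map.empty = {g}"
  using assms unfolding Psi_def agrees_def unique_global_max_def
  by (auto; metis less_le not_le)

locale ctx =
  fixes f :: "('v::finite) chrom \<Rightarrow> real" and g :: "'v chrom" and vs :: "'v list"
  assumes ug: "unique_global_max f g"
    and nw: "no_weak_epistasis f"
    and dist: "distinct vs" and setvs: "set vs = UNIV"
    and topo: "\<forall>i j. i < j \<and> j < length vs \<longrightarrow> \<not> epistatic f {vs ! j} (vs ! i)"
begin

lemma nth_inj: "i < length vs \<Longrightarrow> j < length vs \<Longrightarrow> (vs ! i = vs ! j) = (i = j)"
  using dist by (simp add: nth_eq_iff_index_eq)

lemma C: "i < length vs \<Longrightarrow> \<forall>y. (\<forall>j<i. y (vs!j) = g (vs!j)) \<longrightarrow>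
      f (y(vs!i := \<not> g (vs!i))) < f (y(vs!i := g (vs!i)))"
proof (induction i rule: less_induct)
  case (less i)
  show ?case
  proof (intro allI impI)
    fix y :: "'v chrom"
    assume pre: "\<forall>j<i. y (vs!j) = g (vs!j)"
    define S where "S = {vs!j |j. i < j \<and> j < length vs}"
    define B :: "'v assignment" where "B = (\<lambda>u. if u \<in> S then Some (y u) else None)"
    have viS: "vs!i \<notin> S" using less.prems nth_inj by (auto simp: S_def)
    have sing: "\<forall>u\<in>S. \<not> epistatic f {u} (vs!i)" using topo by (auto simp: S_def)
    have allne: "\<forall>T. T \<subseteq> S \<longrightarrow> \<not> epistatic f T (vs!i)"
      using no_epi_subsets[OF nw sing] by blast
    have domB: "dom B = S" by (auto simp: B_def dom_def)
    have PB: "Psi_at f B (vs!i) = {g (vs!i)}"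
      using chain[OF allne viS, of B] domB Psi_empty[OF ug] by (simp add: Psi_at_def)
    define X where "X = {\<phi>. agrees \<phi> B}"
    have yX: "y \<in> X" by (simp add: X_def agrees_def B_def split: if_splits)
    have finX: "finite (f ` X)" by simp
    have "Max (f ` X) \<in> f ` X" using yX finX by (intro Max_in) auto
    then obtain z where zX: "z \<in> X" and zm: "f z = Max (f ` X)" by auto
    have zmax: "\<forall>\<phi>. agrees \<phi> B \<longrightarrow> f \<phi> \<le> f z"
      using zm finX X_def by auto
    have zPsi: "z \<in> Psi f B" using zX zmax by (simp add: Psi_def X_def)
    have zi: "z (vs!i) = g (vs!i)" using zPsi PB by (auto simp: Psi_at_def)
    have agB: "\<And>\<phi> k b. agrees \<phi> B \<Longrightarrow> k \<le> i \<Longrightarrow> agrees (\<phi>(vs!k := b)) B"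
    proof -
      fix \<phi> :: "'v chrom" and k b assume a: "agrees \<phi> B" "k \<le> i"
      have "vs!k \<notin> S" using a(2) less.prems nth_inj by (auto simp: S_def)
      then show "agrees (\<phi>(vs!k := b)) B" using a(1) by (auto simp: agrees_def B_def)
    qed
    have zpre: "\<forall>j<i. z (vs!j) = g (vs!j)"
    proof (intro allI impI)
      fix j assume "j < i"
      then show "z (vs!j) = g (vs!j)"
      proof (induction j rule: less_induct)
        case (less j)
        show ?case
        proof (rule ccontr)
          assume nz: "z (vs!j) \<noteq> g (vs!j)"
          define z' where "z' = z(vs!j := g (vs!j))"
          have jl: "j < length vs" using less.prems \<open>i < length vs\<close> by simp
          have pre': "\<forall>j'<j. z' (vs!j') = g (vs!j')"
            using less.IH less.prems jl nth_inj by (auto simp: z'_def)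
          have "f (z'(vs!j := \<not> g (vs!j))) < f (z'(vs!j := g (vs!j)))"
            using \<open>\<And>y. y < i \<Longrightarrow> y < length vs \<Longrightarrow> _\<close> less.prems jl pre' by blast
          moreover have "z'(vs!j := \<not> g (vs!j)) = z" using nz by (auto simp: z'_def fun_eq_iff)
          moreover have "z'(vs!j := g (vs!j)) = z'" by (simp add: z'_def)
          ultimately have "f z < f z'" by simp
          moreover have "agrees z' B" unfolding z'_def
            using agB zX less.prems by (simp add: X_def)
          ultimately show False using zmax by fastforce
        qed
      qed
    qed
    have zeq: "z = y(vs!i := g (vs!i))"
    proof
      fix u
      obtain k where k: "k < length vs" "u = vs!k"
        using setvs by (metis UNIV_I in_set_conv_nth)
      show "z u = (y(vs!i := g (vs!i))) u"
      proof (cases k i rule: linorder_cases)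
        case less
        then show ?thesis using k zpre pre nth_inj less.prems by auto
      next
        case equal
        then show ?thesis using k zi by simp
      next
        case greater
        then have "u \<in> S" using k by (auto simp: S_def)
        moreover have "vs!k \<noteq> vs!i" using greater k nth_inj less.prems by auto
        ultimately show ?thesis using zX k by (auto simp: X_def agrees_def B_def)
      qed
    qed
    define w where "w = y(vs!i := \<not> g (vs!i))"
    have wB: "agrees w B" using agB[of y i, OF _ order_refl] yX by (simp add: X_def w_def)
    have "f w \<le> f z" using zmax wB by blast
    moreover have "f w \<noteq> f z"
    proof
      assume "f w = f z"
      then have "w \<in> Psi f B" using wB zmax by (simp add: Psi_def)
      then have "w (vs!i) \<in> Psi_at f B (vs!i)" by (simp add: Psi_at_def)
      with PB show False by (simp add: w_def)
    qed
    ultimately show "f (y(vs!i := \<not> g (vs!i))) < f (y(vs!i := g (vs!i)))"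
      using zeq w_def by simp
  qed
qed

end

lemma apply_single: "apply_asg y [v \<mapsto> a] = y(v := a)"
  by (auto simp: apply_asg_def fun_eq_iff)

lemma block:
  assumes "distinct As" "set As = {A. dom A = {v}}"
  shows "\<exists>b. fst (fold (pe_step f) As (y, n)) = y(v := b) \<and> snd (fold (pe_step f) As (y, n)) = n + 2
     \<and> f (y(v := True)) \<le> f (fst (fold (pe_step f) As (y, n)))
     \<and> f (y(v := False)) \<le> f (fst (fold (pe_step f) As (y, n)))"
proof -
  have S: "{A. dom A = {v}} = {[v \<mapsto> True], [v \<mapsto> False]}"
  proof (intro set_eqI iffI)
    fix A :: "'a assignment" assume "A \<in> {A. dom A = {v}}"
    then have d: "dom A = {v}" by simp
    then obtain a where "A v = Some a" by auto
    moreover have "\<And>u. u \<noteq> v \<Longrightarrow> A u = None" using d by auto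
    ultimately have "A = [v \<mapsto> a]" by (auto simp: fun_eq_iff)
    then show "A \<in> {[v \<mapsto> True], [v \<mapsto> False]}" by (cases a) auto
  qed (auto simp: dom_def split: if_splits)
  have "length As = 2" using assms S distinct_card[OF assms(1)]
    by (simp add: fun_eq_iff)
  then obtain A1 A2 where As: "As = [A1, A2]"
    by (metis (no_types, lifting) One_nat_def Suc_1 length_0_conv length_Suc_conv)
  have "(A1 = [v \<mapsto> True] \<and> A2 = [v \<mapsto> False]) \<or> (A1 = [v \<mapsto> False] \<and> A2 = [v \<mapsto> True])"
    using assms As S by (auto simp: doubleton_eq_iff)
  moreover have yv: "y = y(v := y v)" by simp
  ultimately show ?thesis unfolding As
    apply (elim disjE conjE)
     apply (simp_all add: pe_step_def apply_single Let_def)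
     apply (auto intro: exI[of _ "y v"] exI[of _ True] exI[of _ False])
    done
qed

theorem theorem2:
  fixes f :: "('v::finite) chrom \<Rightarrow> real" and g :: "'v chrom" and vs :: "'v list"
  assumes "unique_global_max f g"
    and "no_weak_epistasis f"
    and "distinct vs" and "set vs = UNIV"
    and "\<forall>i j. i < j \<and> j < length vs \<longrightarrow> \<not> epistatic f {vs ! j} (vs ! i)"
  shows "\<forall>y orders. valid_orders (map (\<lambda>v. {v}) vs) orders \<longrightarrow>
           (\<forall>i < length vs. fst (pe_run f orders y) (vs ! i) = g (vs ! i))
           \<and> snd (pe_run f orders y) = 2 * length vs"
proof (intro allI impI)
  interpret ctx f g vs using assms by (unfold_locales; blast)
  fix y orders
  assume vo: "valid_orders (map (\<lambda>v. {v}) vs) orders"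
  define F where "F = (\<lambda>As st. fold (pe_step f) As st)"
  have lo: "length orders = length vs" using vo by (simp add: valid_orders_def)
  have blk: "\<And>k. k < length vs \<Longrightarrow> distinct (orders!k) \<and> set (orders!k) = {A. dom A = {vs!k}}"
    using vo by (simp add: valid_orders_def)
  have inv: "k \<le> length vs \<Longrightarrow> (\<forall>j<k. fst (fold F (take k orders) (y, 0)) (vs!j) = g (vs!j))
            \<and> snd (fold F (take k orders) (y, 0)) = 2 * k" for k
  proof (induction k)
    case 0
    then show ?case by simp
  next
    case (Suc k)
    then have kl: "k < length vs" by simp
    obtain yk nk where st: "fold F (take k orders) (y, 0) = (yk, nk)" by fastforce
    from Suc.IH kl st have pre: "\<forall>j<k. yk (vs!j) = g (vs!j)" and nk: "nk = 2 * k" by auto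
    have tk: "take (Suc k) orders = take k orders @ [orders!k]"
      using kl lo by (simp add: take_Suc_conv_app_nth)
    have eq: "fold F (take (Suc k) orders) (y, 0) = fold (pe_step f) (orders!k) (yk, nk)"
      unfolding tk using st by (simp add: F_def)
    obtain b where b: "fst (fold (pe_step f) (orders!k) (yk, nk)) = yk(vs!k := b)"
      and sn: "snd (fold (pe_step f) (orders!k) (yk, nk)) = nk + 2"
      and m1: "f (yk(vs!k := True)) \<le> f (fst (fold (pe_step f) (orders!k) (yk, nk)))"
      and m2: "f (yk(vs!k := False)) \<le> f (fst (fold (pe_step f) (orders!k) (yk, nk)))"
      using block[OF conjunct1[OF blk[OF kl]] conjunct2[OF blk[OF kl]]] by blast
    have C1: "f (yk(vs!k := \<not> g (vs!k))) < f (yk(vs!k := g (vs!k)))"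
      using C[OF kl] pre by blast
    have bg: "b = g (vs!k)"
    proof (rule ccontr)
      assume "b \<noteq> g (vs!k)"
      then have "b = (\<not> g (vs!k))" by blast
      moreover have "f (yk(vs!k := g (vs!k))) \<le> f (yk(vs!k := b))"
        using m1 m2 b by (cases "g (vs!k)") auto
      ultimately show False using C1 by simp
    qed
    show ?case
    proof (intro conjI allI impI)
      fix j assume "j < Suc k"
      then show "fst (fold F (take (Suc k) orders) (y, 0)) (vs!j) = g (vs!j)"
        using eq b bg pre nth_inj kl by (cases "j = k") auto
    next
      show "snd (fold F (take (Suc k) orders) (y, 0)) = 2 * Suc k"
        using eq sn nk by simp
    qed
  qed
  have "pe_run f orders y = fold F (take (length vs) orders) (y, 0)"
    using lo by (simp add: pe_run_def F_def)
  then show "(\<forall>i < length vs. fst (pe_run f orders y) (vs ! i) = g (vs ! i))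
           \<and> snd (pe_run f orders y) = 2 * length vs"
    using inv[of "length vs"] by simp
qed

end
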